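(* Let $m \geq 1$ be an integer and let $q \in (m, m+1)$ be a Pisot number. Then $q$ has no non-real Galois conjugate $q'$ with $|q'| < \frac{1}{m+1/2}$, and $q$ has at most one real Galois conjugate $q'$ with $|q'| < \frac{1}{m+1/2}$.
   Context: A Pisot number is a real algebraic integer $q>1$ all of whose other Galois conjugates have absolute value strictly less than $1$. *)

theory Defs
  imports "HOL-Computational_Algebra.Computational_Algebra" "HOL-Analysis.Analysis"
begin

definition algebraic_integer :: "real \<Rightarrow> bool" where
  "algebraic_integer x \<longleftrightarrow>
     (\<exists>p :: int poly. lead_coeff p = 1 \<and> poly (map_poly of_int p) x = 0)"

text \<open>Galois conjugates of a real algebraic number q (other than q itself): the complex roots,
  different from q, of an irreducible integer polynomial having q as a root
  (such a polynomial is the minimal polynomial up to a sign).\<close>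
definition galois_conjugates :: "real \<Rightarrow> complex set" where
  "galois_conjugates q =
     {z. \<exists>p :: int poly. irreducible p \<and> poly (map_poly of_int p) (complex_of_real q) = 0
            \<and> poly (map_poly of_int p) z = 0} - {complex_of_real q}"

definition pisot :: "real \<Rightarrow> bool" where
  "pisot q \<longleftrightarrow> q > 1 \<and> algebraic_integer q \<and> (\<forall>z \<in> galois_conjugates q. cmod z < 1)"

end

theory Submission
  imports Defs
begin

abbreviation ev :: "int poly \<Rightarrow> complex \<Rightarrow> complex" where
  "ev F x \<equiv> poly (map_poly of_int F) x"

lemma ev_pCons: "ev (pCons a p) x = of_int a + x * ev p x"
  by (simp add: map_poly_pCons)

lemma ev_smult: "ev (smult a p) x = of_int a * ev p x"
  by (simp add: map_poly_smult)

lemma ev_add: "ev (p + q) x = ev p x + ev q x"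
proof -
  have "map_poly (of_int::int\<Rightarrow>complex) (p + q) = map_poly of_int p + map_poly of_int q"
    by (intro poly_eqI) (simp add: coeff_map_poly)
  then show ?thesis by simp
qed

lemma ev_mult: "ev (p * q) x = ev p x * ev q x"
  by (induct p) (simp_all add: map_poly_pCons ev_pCons ev_add ev_smult algebra_simps)

lemma ev_diff: "ev (p - q) x = ev p x - ev q x"
proof -
  have "map_poly (of_int::int\<Rightarrow>complex) (p - q) = map_poly of_int p - map_poly of_int q"
    by (intro poly_eqI) (simp add: coeff_map_poly)
  then show ?thesis by simp
qed

lemma ev_of_real: "ev F (complex_of_real x) = complex_of_real (poly (map_poly of_int F) x)"
  by (simp add: poly_altdef degree_map_poly coeff_map_poly)

lemma map_pderiv: "map_poly (of_int::int\<Rightarrow>complex) (pderiv P) = pderiv (map_poly of_int P)"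
  by (intro poly_eqI) (simp add: coeff_map_poly coeff_pderiv)

lemma ev_0: "ev F 0 = of_int (coeff F 0)"
  by (simp add: poly_0_coeff_0 coeff_map_poly)

lemma prod_bound:
  fixes R :: "complex poly"
  assumes "R \<noteq> 0" "\<And>w. poly R w = 0 \<Longrightarrow> cmod w \<le> 1"
  shows "cmod (poly R 0) \<le> cmod (lead_coeff R)"
  using assms
proof (induct "degree R" arbitrary: R)
  case 0
  then obtain c where "R = [:c:]" using degree_eq_zeroE[of R] by metis
  then show ?case by simp
next
  case (Suc n)
  then have "\<not> constant (poly R)" using constant_degree by force
  then obtain w where w: "poly R w = 0" using fundamental_theorem_of_algebra by blast
  then obtain R' where R': "R = [:-w,1:] * R'" using poly_eq_0_iff_dvd by (metis dvdE)
  have "R' \<noteq> 0" using Suc.prems R' by auto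
  have dR: "degree R = Suc (degree R')" unfolding R' using \<open>R' \<noteq> 0\<close> by (subst degree_mult_eq) auto
  have "n = degree R'" using Suc.hyps(2) dR by simp
  moreover have "\<And>v. poly R' v = 0 \<Longrightarrow> cmod v \<le> 1" using Suc.prems(2) R' by simp
  ultimately have ih: "cmod (poly R' 0) \<le> cmod (lead_coeff R')" using Suc.hyps(1) \<open>R' \<noteq> 0\<close> by blast
  have "lead_coeff R = lead_coeff R'" unfolding R' lead_coeff_mult by simp
  moreover have "poly R 0 = - w * poly R' 0" using R' by simp
  moreover have "cmod w \<le> 1" using Suc.prems(2) w by simp
  ultimately show ?case using ih
    by (simp add: norm_mult) (metis mult_left_le_one_le norm_ge_zero order_trans)
qed

lemma main_bound:
  fixes P :: "complex poly" and q :: real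
  assumes lc: "cmod (lead_coeff P) = 1" and c0: "1 \<le> cmod (poly P 0)"
    and r: "poly P (of_real q) = 0" and s: "poly (pderiv P) (of_real q) \<noteq> 0"
    and roots: "\<And>w. poly P w = 0 \<Longrightarrow> w \<noteq> of_real q \<Longrightarrow> cmod w < 1"
    and a: "poly P a = 0" "a \<noteq> of_real q" and b: "poly P b = 0" "b \<noteq> of_real q" and ab: "a \<noteq> b"
    and qpos: "q > 0"
  shows "1 \<le> q * cmod a * cmod b"
proof -
  have P0: "P \<noteq> 0" using lc by auto
  obtain R where R: "P = [:-of_real q,1:] * R" using r poly_eq_0_iff_dvd by (metis dvdE)
  have d1: "pderiv [:-of_real q,1:] = (1::complex poly)" by (simp add: pderiv_pCons)
  have "pderiv P = [:-of_real q,1:] * pderiv R + R * 1" by (simp only: R pderiv_mult d1)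
  then have Rq: "poly R (of_real q) \<noteq> 0" using s by simp
  have "poly R a = 0" using a R by simp
  then obtain R2 where R2: "R = [:-a,1:] * R2" using poly_eq_0_iff_dvd by (metis dvdE)
  have "poly R2 b = 0" using b R R2 ab by simp
  then obtain R3 where R3: "R2 = [:-b,1:] * R3" using poly_eq_0_iff_dvd by (metis dvdE)
  have PR: "P = [:-of_real q,1:] * ([:-a,1:] * ([:-b,1:] * R3))" using R R2 R3 by simp
  have R30: "R3 \<noteq> 0" using P0 PR by auto
  have lc3: "lead_coeff R3 = lead_coeff P" unfolding PR lead_coeff_mult by simp
  have "\<And>w. poly R3 w = 0 \<Longrightarrow> cmod w \<le> 1"
  proof -
    fix w assume w: "poly R3 w = 0"
    have "poly P w = 0" using PR w by simp
    moreover have "w \<noteq> of_real q" using Rq R R2 R3 w by auto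
    ultimately show "cmod w \<le> 1" using roots by fastforce
  qed
  then have "cmod (poly R3 0) \<le> 1" using prod_bound[OF R30] lc3 lc by simp
  moreover have "poly P 0 = - of_real q * (- a * (- b * poly R3 0))" using PR by simp
  ultimately have "cmod (poly P 0) \<le> q * cmod a * cmod b"
    using qpos by (simp add: norm_mult mult_left_le mult_left_mono)
  then show ?thesis using c0 by simp
qed

lemma minpoly_exists:
  assumes "F \<noteq> 0" "ev F x = 0"
  obtains M where "M \<noteq> 0" "ev M x = 0" "Polynomial.content M = 1"
    "\<And>G. G \<noteq> 0 \<Longrightarrow> ev G x = 0 \<Longrightarrow> degree M \<le> degree G"
proof -
  obtain F0 where F0: "F0 \<noteq> 0 \<and> ev F0 x = 0"
    and min: "\<And>G. G \<noteq> 0 \<and> ev G x = 0 \<Longrightarrow> degree F0 \<le> degree G"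
    using ex_has_least_nat[of "\<lambda>G. G \<noteq> 0 \<and> ev G x = 0" F degree] assms by blast
  define M where "M = primitive_part F0"
  have "M \<noteq> 0" using F0 M_def by simp
  moreover have "Polynomial.content M = 1" using F0 M_def by simp
  moreover have "ev M x = 0"
  proof -
    have "ev F0 x = of_int (Polynomial.content F0) * ev M x"
      unfolding M_def by (subst (1) content_times_primitive_part[symmetric, of F0], subst ev_smult) simp
    then show ?thesis using F0 by simp
  qed
  moreover have "\<And>G. G \<noteq> 0 \<Longrightarrow> ev G x = 0 \<Longrightarrow> degree M \<le> degree G"
    using min M_def by simp
  ultimately show ?thesis using that by blast
qed

lemma minpoly_dvd:
  assumes M: "M \<noteq> 0" "ev M x = 0" "Polynomial.content M = 1"
    "\<And>G. G \<noteq> 0 \<Longrightarrow> ev G x = 0 \<Longrightarrow> degree M \<le> degree G"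
    and F: "ev F x = 0"
  shows "M dvd F"
proof -
  define r where "r = pseudo_mod F M"
  obtain a s where as: "a \<noteq> 0" "smult a F = M * s + r"
    using pseudo_mod(1)[OF M(1), of F] r_def by blast
  have rd: "r = 0 \<or> degree r < degree M" using pseudo_mod(2)[OF M(1), of F] r_def by blast
  have "r = smult a F - M * s" using as by simp
  then have "ev r x = 0" using F M(2) by (simp add: ev_diff ev_smult ev_mult)
  then have r0: "r = 0" using rd M(4) by fastforce
  have "fract_poly M dvd fract_poly F"
  proof -
    have "smult (to_fract a) (fract_poly F) = fract_poly M * fract_poly s"
      using as r0 by (metis add.right_neutral fract_poly_mult fract_poly_smult)
    then have "fract_poly F = fract_poly M * smult (inverse (to_fract a)) (fract_poly s)"
      using as(1) by (metis (no_types, lifting) mult_smult_right smult_smult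
          field_class.field_inverse mult.commute smult_1_left to_fract_eq_0_iff)
    then show ?thesis by (rule dvdI)
  qed
  then show ?thesis using fract_poly_dvdD M(3) by blast
qed

lemma arith_bound:
  fixes m :: nat and q A B :: real
  assumes "m \<ge> 1" "0 < q" "q < real m + 1" "0 \<le> A" "A < 1 / (real m + 1/2)"
    "0 \<le> B" "B < 1 / (real m + 1/2)"
  shows "q * A * B < 1"
proof -
  define t where "t = real m + 1/2"
  have t: "t \<ge> 3/2" using assms(1) unfolding t_def by simp
  define r where "r = 1 / t"
  have r0: "r > 0" unfolding r_def using t by simp
  have "A * B < r * r" by (rule mult_strict_mono) (use assms r_def t_def r0 in auto)
  then have "q * (A * B) \<le> q * (r * r)" using assms(2) by simp
  also have "q * (r * r) < (t + 1/2) * (r * r)"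
    using assms(3) r0 unfolding t_def by (intro mult_strict_right_mono) auto
  also have "(t + 1/2) * (r * r) = (t + 1/2) / (t * t)" unfolding r_def by simp
  also have "\<dots> \<le> 1"
  proof -
    have "t * (t - 1) \<ge> 3/2 * (1/2)" using t by (intro mult_mono) auto
    then have "t + 1/2 \<le> t * t" by (simp add: algebra_simps)
    then show ?thesis using t by simp
  qed
  finally show ?thesis by (simp add: mult.assoc)
qed

theorem theorem2p1:
  fixes m :: nat and q :: real
  assumes "m \<ge> 1" and "real m < q" and "q < real m + 1" and "pisot q"
  shows "\<not> (\<exists>z \<in> galois_conjugates q. Im z \<noteq> 0 \<and> cmod z < 1 / (real m + 1/2))
       \<and> card {z \<in> galois_conjugates q. Im z = 0 \<and> cmod z < 1 / (real m + 1/2)} \<le> 1"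
proof -
  define xq where "xq = complex_of_real q"
  have q1: "q > 1" and pis: "\<And>z. z \<in> galois_conjugates q \<Longrightarrow> cmod z < 1"
    using assms(4) unfolding pisot_def by auto
  obtain Q where Q: "lead_coeff Q = 1" "poly (map_poly of_int Q) q = 0"
    using assms(4) unfolding pisot_def algebraic_integer_def by auto
  have Q0: "Q \<noteq> 0" using Q by auto
  have Qx: "ev Q xq = 0" unfolding xq_def ev_of_real using Q by simp
  obtain M where M: "M \<noteq> 0" "ev M xq = 0" "Polynomial.content M = 1"
    "\<And>G. G \<noteq> 0 \<Longrightarrow> ev G xq = 0 \<Longrightarrow> degree M \<le> degree G"
    using minpoly_exists[OF Q0 Qx] by blast
  have Mdvd: "\<And>F. ev F xq = 0 \<Longrightarrow> M dvd F" using minpoly_dvd[OF M] by blast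
  have xq0: "xq \<noteq> 0" unfolding xq_def using q1 by simp
  have degM: "degree M > 0"
  proof (rule ccontr)
    assume "\<not> degree M > 0"
    then obtain c where "M = [:c:]" using degree_eq_zeroE[of M] by auto
    then show False using M(1,2) by (simp add: map_poly_pCons)
  qed
  have Mnu: "\<not> is_unit M" using degM is_unit_poly_iff[of M] by auto
  have lcM: "lead_coeff M = 1 \<or> lead_coeff M = -1"
  proof -
    obtain v where "Q = M * v" using Mdvd[OF Qx] by (elim dvdE)
    then have "lead_coeff M * lead_coeff v = 1" using Q(1) by (simp add: lead_coeff_mult)
    then show ?thesis using zmult_eq_1_iff by blast
  qed
  have irrM: "irreducible M"
  proof (rule irreducibleI)
    show "M \<noteq> 0" by (rule M(1))
    show "\<not> is_unit M" by (rule Mnu)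
    fix a b assume ab: "M = a * b"
    have key: "is_unit b" if "M = a * b" "ev a xq = 0" for a b
    proof -
      have a0: "a \<noteq> 0" "b \<noteq> 0" using that M(1) by auto
      have "degree M = degree a + degree b" using that a0 by (simp add: degree_mult_eq)
      moreover have "degree M \<le> degree a" using M(4) a0 that by blast
      ultimately have "degree b = 0" by simp
      then obtain c where c: "b = [:c:]" using degree_eq_zeroE[of b] by auto
      have "Polynomial.content a * normalize c = 1" using M(3) that c by (simp add: content_mult mult.commute)
      then have "normalize c dvd 1" by (metis dvd_triv_right)
      then have "c dvd 1" by simp
      then show ?thesis using c is_unit_poly_iff by blast
    qed
    have "ev a xq * ev b xq = 0" using M(2) ab by (simp add: ev_mult)
    then show "is_unit a \<or> is_unit b"
      using key[OF ab] key[of b a] ab by (auto simp: mult.commute)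
  qed
  have assoc: "\<exists>c. c \<noteq> 0 \<and> P = smult c M" if Pa: "irreducible P" "ev P xq = 0" for P
  proof -
    obtain w where w: "P = M * w" using Mdvd[OF Pa(2)] by (elim dvdE)
    then have "is_unit w" using Pa(1) Mnu irreducibleD by blast
    then obtain c where c: "w = [:c:]" "c dvd 1" using is_unit_poly_iff by blast
    then have "c \<noteq> 0" by auto
    then show ?thesis using w c by auto
  qed
  have galM: "ev M z = 0 \<and> z \<noteq> xq" if zg: "z \<in> galois_conjugates q" for z
  proof -
    obtain P where P: "irreducible P" "ev P xq = 0" "ev P z = 0" "z \<noteq> xq"
      using zg unfolding galois_conjugates_def xq_def by auto
    obtain c where "c \<noteq> 0" "P = smult c M" using assoc[OF P(1,2)] by blast
    then show ?thesis using P by (simp add: ev_smult)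
  qed
  have roots: "cmod w < 1" if "ev M w = 0" "w \<noteq> xq" for w
  proof -
    have "w \<in> galois_conjugates q" unfolding galois_conjugates_def
      using irrM M(2) that unfolding xq_def by blast
    then show ?thesis by (rule pis)
  qed
  have simple: "poly (pderiv (map_poly of_int M)) xq \<noteq> 0"
  proof
    assume "poly (pderiv (map_poly of_int M)) xq = 0"
    then have h: "ev (pderiv M) xq = 0" by (simp add: map_pderiv)
    have "pderiv M \<noteq> 0" using degM pderiv_eq_0_iff[of M] by auto
    then have "degree M \<le> degree (pderiv M)" using M(4) h by blast
    then show False using degM degree_pderiv[of M] by simp
  qed
  have c0: "coeff M 0 \<noteq> 0"
  proof
    assume "coeff M 0 = 0"
    then have "poly M 0 = 0" by (simp add: poly_0_coeff_0)
    then obtain M' where M': "M = [:0,1:] * M'" using poly_eq_0_iff_dvd[of M 0] by (auto elim: dvdE)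
    have "M' \<noteq> 0" using M(1) M' by auto
    have "ev M xq = xq * ev M' xq" unfolding M' ev_mult by (simp add: map_poly_pCons)
    then have "ev M' xq = 0" using M(2) xq0 by simp
    then have "degree M \<le> degree M'" using M(4) \<open>M' \<noteq> 0\<close> by blast
    moreover have "degree M = Suc (degree M')" unfolding M' using \<open>M' \<noteq> 0\<close>
      by (subst degree_mult_eq) auto
    ultimately show False by simp
  qed
  have lc: "cmod (lead_coeff (map_poly (of_int::int\<Rightarrow>complex) M)) = 1"
    using lcM by (subst lead_coeff_map_poly_nz) auto
  have cc0: "1 \<le> cmod (poly (map_poly (of_int::int\<Rightarrow>complex) M) 0)"
    using c0 ev_0[of M] by simp
  have bound: "1 \<le> q * cmod a * cmod b"
    if "ev M a = 0" "a \<noteq> xq" "ev M b = 0" "b \<noteq> xq" "a \<noteq> b" for a b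
  proof -
    have r: "\<And>w. poly (map_poly of_int M) w = 0 \<Longrightarrow> w \<noteq> complex_of_real q \<Longrightarrow> cmod w < 1"
      using roots unfolding xq_def by blast
    show ?thesis by (rule main_bound[OF lc cc0 _ _ r]) (use M(2) simple q1 that xq_def in auto)
  qed
  have contra: "False" if "z1 \<in> galois_conjugates q" "z2 \<in> galois_conjugates q" "z1 \<noteq> z2"
    "cmod z1 < 1 / (real m + 1/2)" "cmod z2 < 1 / (real m + 1/2)" for z1 z2
  proof -
    have "1 \<le> q * cmod z1 * cmod z2" using bound galM that by blast
    moreover have "q * cmod z1 * cmod z2 < 1"
      using arith_bound[OF assms(1) _ assms(3)] that q1 by simp
    ultimately show False by simp
  qed
  have part1: "\<not> (\<exists>z \<in> galois_conjugates q. Im z \<noteq> 0 \<and> cmod z < 1 / (real m + 1/2))"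
  proof
    assume "\<exists>z \<in> galois_conjugates q. Im z \<noteq> 0 \<and> cmod z < 1 / (real m + 1/2)"
    then obtain z where z: "z \<in> galois_conjugates q" "Im z \<noteq> 0" "cmod z < 1 / (real m + 1/2)"
      by blast
    have evz: "ev M z = 0" using galM z(1) by blast
    have "ev M (cnj z) = 0"
      using evz real_poly_cnj_root_iff[of "map_poly of_int M" z] by (simp add: coeff_map_poly)
    moreover have "cnj z \<noteq> xq" using z(2) unfolding xq_def by (auto simp: complex_eq_iff)
    ultimately have "cnj z \<in> galois_conjugates q" unfolding galois_conjugates_def
      using irrM M(2) unfolding xq_def by blast
    moreover have "cnj z \<noteq> z" using z(2) by (auto simp: complex_eq_iff)
    ultimately show False using contra[OF z(1), of "cnj z"] z(3) by auto
  qed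
  have part2: "card {z \<in> galois_conjugates q. Im z = 0 \<and> cmod z < 1 / (real m + 1/2)} \<le> 1"
    (is "card ?S \<le> 1")
  proof (cases "finite ?S")
    case True
    have "\<forall>a1\<in>?S. \<forall>a2\<in>?S. a1 = a2" using contra by blast
    then show ?thesis using card_le_Suc0_iff_eq[OF True] by simp
  next
    case False
    then show ?thesis by simp
  qed
  show ?thesis using part1 part2 by blast
qed

end
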